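(* There exist absolute constants $\lambda,C>0$ with the following property. Let $t\ge 1$, let $w_1,\dots,w_t>0$ be fixed weights, and let $W=\sum_{i=1}^t w_i$. Fix $\ell\in[t]$ and assume $w_i\le\frac{1}{2\ell}W$ for all $i\in[t]$. Let $t_1,\dots,t_t$ be i.i.d. exponential random variables with rate $1$, and set $v_i=w_i/t_i$. Let $D(1),\dots,D(t)$ be the anti-ranks, i.e. the random indices with $v_{D(1)}\ge v_{D(2)}\ge\dots\ge v_{D(t)}$. Then for every $c\ge 1/2$, $$\Pr\!\left[v_{D(\ell)}\le\frac{W}{c\,\ell}\right]\le\lambda e^{-Cc}.$$
   Context: An exponential random variable with rate $1$ has density $e^{-x}$ for $x\ge 0$. The anti-ranks are almost surely uniquely defined. *)

theory Defs
  imports "HOL-Probability.Probability"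
begin

text \<open>The \<open>k\<close>-th largest of the values \<open>v 1, ..., v t\<close> (for \<open>1 \<le> k \<le> t\<close>),
  i.e. \<open>v (D k)\<close> where \<open>D\<close> are the anti-ranks (\<open>v (D 1) \<ge> ... \<ge> v (D t)\<close>).
  This value does not depend on how ties are broken.\<close>
definition kth_largest :: "(nat \<Rightarrow> real) \<Rightarrow> nat \<Rightarrow> nat \<Rightarrow> real" where
  "kth_largest v t k = rev (sort (map v [1..<t+1])) ! (k - 1)"

definition exp_iid_space :: "nat \<Rightarrow> (nat \<Rightarrow> real) measure" where
  "exp_iid_space t = PiM {1..t} (\<lambda>_. density lborel (exponential_density 1))"

end

theory Submission
  imports Defs
begin

lemma kth_card:
  fixes v :: "nat \<Rightarrow> real"
  assumes l: "1 \<le> l" "l \<le> t" and k: "kth_largest v t l \<le> T"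
  shows "card {i\<in>{1..t}. v i > T} \<le> l - 1"
proof -
  define xs where "xs = rev (sort (map v [1..<t+1]))"
  have len: "length xs = t" by (simp add: xs_def)
  have sr: "sorted (rev xs)" by (simp add: xs_def)
  have kl: "xs ! (l-1) \<le> T" using k by (simp add: kth_largest_def xs_def)
  have dr: "filter (\<lambda>x. x > T) (drop (l-1) xs) = []"
  proof -
    have "\<forall>x\<in>set (drop (l-1) xs). \<not> x > T"
    proof
      fix x assume "x \<in> set (drop (l-1) xs)"
      then obtain j where j: "j < length (drop (l-1) xs)" "x = drop (l-1) xs ! j"
        by (metis in_set_conv_nth)
      then have "x = xs ! (l - 1 + j)" "l - 1 + j < length xs" by auto
      then have "x \<le> xs ! (l-1)" using sorted_rev_nth_mono[OF sr] by simp
      then show "\<not> x > T" using kl by simp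
    qed
    then show ?thesis by (simp add: filter_empty_conv)
  qed
  have "length (filter (\<lambda>x. x > T) xs) = length (filter (\<lambda>x. x > T) (take (l-1) xs))"
    using dr by (metis append_Nil2 append_take_drop_id filter_append)
  also have "\<dots> \<le> l - 1" by (metis length_filter_le length_take min.bounded_iff nle_le)
  finally have A: "length (filter (\<lambda>x. x > T) xs) \<le> l - 1" .
  have "length (filter (\<lambda>x. x > T) xs) = length (filter (\<lambda>x. x > T) (map v [1..<t+1]))"
    unfolding xs_def by (metis mset_filter size_mset mset_rev mset_sort)
  also have "\<dots> = length (filter (\<lambda>i. v i > T) [1..<t+1])" by (simp add: filter_map o_def)
  also have "\<dots> = card {i\<in>{1..t}. v i > T}"
    by (subst distinct_length_filter) (auto intro: arg_cong[where f=card])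
  finally show ?thesis using A by simp
qed


lemma logconv:
  fixes a M :: real
  assumes "0 \<le> a" "a \<le> M" "0 < M"
  defines "u \<equiv> exp (- M)"
  shows "u + (1-u) * exp (-a) \<le> (u + (1-u) * exp (-M)) powr (a/M)"
proof -
  define \<theta> where "\<theta> = a / M"
  have th: "0 \<le> \<theta>" "\<theta> \<le> 1" using assms by (auto simp: \<theta>_def)
  have u: "0 < u" "u < 1" using assms by (auto simp: u_def)
  define X where "X = u + (1-u) * exp (-M)"
  have X: "X > 0" using u by (simp add: X_def add_pos_nonneg)
  have y1: "(u/X) powr \<theta> * u powr (1-\<theta>) \<le> \<theta> * (u/X) + (1-\<theta>) * u"
    by (rule Youngs_inequality_0) (use th u X in auto)
  have y2: "((1-u)*exp(-M)/X) powr \<theta> * (1-u) powr (1-\<theta>) \<le> \<theta> * ((1-u)*exp(-M)/X) + (1-\<theta>) * (1-u)"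
    by (rule Youngs_inequality_0) (use th u X in auto)
  have e1: "(u/X) powr \<theta> * u powr (1-\<theta>) = u / X powr \<theta>"
    using u X by (simp add: powr_divide powr_add[symmetric])
  have e2: "((1-u)*exp(-M)/X) powr \<theta> * (1-u) powr (1-\<theta>) = (1-u) * exp (-a) / X powr \<theta>"
  proof -
    have "((1-u)*exp(-M)/X) powr \<theta> = (1-u) powr \<theta> * exp (-M) powr \<theta> / X powr \<theta>"
      using u X by (simp add: powr_divide powr_mult)
    moreover have "exp (-M) powr \<theta> = exp (-a)" using assms
      by (simp add: powr_def \<theta>_def)
    moreover have "(1-u) powr \<theta> * (1-u) powr (1-\<theta>) = 1 - u"
      using u by (simp add: powr_add[symmetric])
    moreover have "(1-u) powr \<theta> * (1-u) powr (1-\<theta>) = 1 - u"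
      using u by (simp add: powr_add[symmetric])
    ultimately have "((1-u)*exp(-M)/X) powr \<theta> * (1-u) powr (1-\<theta>) = ((1-u) powr \<theta> * (1-u) powr (1-\<theta>)) * exp (-a) / X powr \<theta>"
      by simp
    also have "\<dots> = (1-u) * exp (-a) / X powr \<theta>" using \<open>(1-u) powr \<theta> * (1-u) powr (1-\<theta>) = 1 - u\<close> by simp
    finally show ?thesis .
  qed
  have s1: "u / X powr \<theta> + (1-u)*exp(-a)/X powr \<theta> \<le> \<theta>*(u/X + (1-u)*exp(-M)/X) + (1-\<theta>)*(u + (1-u))"
    using y1 y2 e1 e2 by (simp add: algebra_simps)
  have s2: "u/X + (1-u)*exp(-M)/X = 1" using X by (simp add: X_def add_divide_distrib[symmetric])
  have "(u + (1-u) * exp (-a)) / X powr \<theta> \<le> 1"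
    using s1 s2 by (simp add: add_divide_distrib)
  then show ?thesis using X by (simp add: X_def \<theta>_def divide_le_eq)
qed


lemma integral_h:
  fixes u a :: real
  assumes u: "0 \<le> u" "u \<le> 1" and a: "0 < a"
  shows "(\<integral>\<^sup>+ y. ennreal (if 0 < y \<and> y < a then u else 1) \<partial>density lborel (exponential_density 1))
     = ennreal (u + (1-u) * exp (-a))"
proof -
  let ?M = "density lborel (exponential_density 1)"
  interpret prob_space ?M by (rule prob_space_exponential_density) simp
  define A where "A = {0::real<..<a}"
  have sA: "A \<in> sets ?M" by (simp add: A_def)
  have e1: "emeasure ?M {..a} = ennreal (1 - exp (-a))"
    using a by (simp add: emeasure_erlang_density erlang_CDF_def)
  have e0: "emeasure ?M {..0} = 0"
    by (simp add: emeasure_erlang_density erlang_CDF_def)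
  have es: "emeasure ?M {a} = 0"
  proof -
    have "emeasure ?M {a} = (\<integral>\<^sup>+x. ennreal (exponential_density 1 x) * indicator {a} x \<partial>lborel)"
      by (rule emeasure_density) auto
    also have "\<dots> \<le> (\<integral>\<^sup>+x. indicator {a} x \<partial>lborel)"
      by (rule nn_integral_mono) (auto simp: indicator_def exponential_density_def)
    also have "\<dots> = 0" by simp
    finally show ?thesis by simp
  qed
  have bs: "B \<in> sets ?M" if "B \<in> sets borel" for B using that by simp
  have s0: "{..0::real} \<in> sets ?M" by (rule bs) simp
  have sa: "{a} \<in> sets ?M" by (rule bs) simp
  have sAa: "A \<union> {a} \<in> sets ?M" using sA sa by (rule sets.Un)
  have un: "{..a} = {..0} \<union> (A \<union> {a})" using a unfolding A_def by auto
  have d1: "{..0} \<inter> (A \<union> {a}) = {}" using a unfolding A_def by auto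
  have d2: "A \<inter> {a} = {}" unfolding A_def by auto
  have "emeasure ?M {..a} = emeasure ?M {..0} + emeasure ?M (A \<union> {a})"
    unfolding un by (rule plus_emeasure[symmetric, OF s0 sAa d1])
  also have "emeasure ?M (A \<union> {a}) = emeasure ?M A + emeasure ?M {a}"
    by (rule plus_emeasure[symmetric, OF sA sa d2])
  finally have "emeasure ?M A = ennreal (1 - exp (-a))" using e1 e0 es by simp
  then have mA: "prob A = 1 - exp (-a)" using a by (simp add: emeasure_eq_measure)
  have sC: "space ?M - A \<in> sets ?M" using sA by (rule sets.compl_sets)
  have pc: "prob (space ?M - A) = exp (-a)" using prob_compl[OF sA] mA by simp
  have "(\<integral>\<^sup>+ y. ennreal (if 0 < y \<and> y < a then u else 1) \<partial>?M)
      = (\<integral>\<^sup>+ y. ennreal u * indicator A y + indicator (space ?M - A) y \<partial>?M)"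
    by (rule nn_integral_cong) (simp add: A_def indicator_def)
  also have "\<dots> = (\<integral>\<^sup>+ y. ennreal u * indicator A y \<partial>?M) + (\<integral>\<^sup>+ y. indicator (space ?M - A) y \<partial>?M)"
    by (rule nn_integral_add) (use sA sC in measurable)
  also have "\<dots> = ennreal u * emeasure ?M A + emeasure ?M (space ?M - A)"
    using sA sC by (simp only: nn_integral_cmult_indicator nn_integral_indicator)
  also have "\<dots> = ennreal u * ennreal (1 - exp (-a)) + ennreal (exp (-a))"
    using sA sC mA pc by (simp only: emeasure_eq_measure)
  also have "\<dots> = ennreal (u * (1 - exp (-a)) + exp (-a))"
    using u a by (simp add: ennreal_mult ennreal_plus)
  finally show ?thesis by (simp add: algebra_simps)
qed

lemma main_bound:
  fixes t l :: nat and w :: "nat \<Rightarrow> real" and c :: real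
  assumes t: "t \<ge> 1" and wpos: "\<forall>i\<in>{1..t}. w i > 0" and l: "l \<in> {1..t}"
    and wle: "\<forall>i\<in>{1..t}. w i \<le> (\<Sum>j=1..t. w j) / (2 * real l)" and c: "c \<ge> 1/2"
  shows "measure (exp_iid_space t)
         {x \<in> space (exp_iid_space t).
            kth_largest (\<lambda>i. w i / x i) t l \<le> (\<Sum>j=1..t. w j) / (c * real l)}
       \<le> 4 * exp (- (1/2) * c)"
proof -
  define W where "W = (\<Sum>j=1..t. w j)"
  have Wpos: "W > 0" unfolding W_def using t wpos by (intro sum_pos) auto
  have l1: "1 \<le> l" "l \<le> t" using l by auto
  have lpos: "real l > 0" using l1 by simp
  have cpos: "c > 0" using c by simp
  define T where "T = W / (c * real l)"
  have Tpos: "T > 0" using Wpos cpos lpos by (simp add: T_def)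
  define M where "M = c / 2"
  have Mpos: "M > 0" using cpos by (simp add: M_def)
  define u where "u = exp (- M)"
  have u: "0 < u" "u \<le> 1" using Mpos by (auto simp: u_def)
  define a where "a i = c * real l * w i / W" for i
  have apos: "0 < a i" if "i \<in> {1..t}" for i using that wpos Wpos cpos lpos by (simp add: a_def)
  have ale: "a i \<le> M" if "i \<in> {1..t}" for i
  proof -
    have "c * real l * w i \<le> c * real l * (W / (2 * real l))"
      using wle that cpos lpos by (intro mult_left_mono) (auto simp: W_def)
    also have "\<dots> = M * W" using lpos by (simp add: M_def field_simps)
    finally show ?thesis using Wpos by (simp add: a_def divide_le_eq)
  qed
  have suma: "(\<Sum>i\<in>{1..t}. a i) = c * real l"
  proof -
    have "(\<Sum>i\<in>{1..t}. a i) = c * real l * W / W"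
      unfolding a_def W_def by (simp add: sum_divide_distrib[symmetric] sum_distrib_left[symmetric])
    then show ?thesis using Wpos by simp
  qed
  have equiv: "(T < w i / y) \<longleftrightarrow> (0 < y \<and> y < a i)" if "i \<in> {1..t}" for i and y :: real
  proof (cases "y > 0")
    case True
    have "T < w i / y \<longleftrightarrow> T * y < w i" using True by (simp add: less_divide_eq)
    also have "\<dots> \<longleftrightarrow> y < w i / T" using Tpos by (simp add: less_divide_eq mult.commute)
    also have "w i / T = a i" using Wpos cpos lpos by (simp add: T_def a_def field_simps)
    finally show ?thesis using True by simp
  next
    case False
    have "w i > 0" using wpos that by auto
    then have "w i / y \<le> 0" using False by (simp add: divide_nonneg_nonpos)
    then show ?thesis using False Tpos by auto
  qed
  define M0 where "M0 = density lborel (exponential_density (1::real))"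
  have pM0: "prob_space M0" unfolding M0_def by (rule prob_space_exponential_density) simp
  define P where "P = exp_iid_space t"
  have PP: "P = PiM {1..t} (\<lambda>_. M0)" by (simp add: P_def exp_iid_space_def M0_def)
  interpret P: prob_space P unfolding PP by (rule prob_space_PiM) (rule pM0)
  interpret PS: product_sigma_finite "\<lambda>_::nat. M0"
    by (simp add: product_sigma_finite_def prob_space_imp_sigma_finite[OF pM0])
  define K where "K = (1/u)^(l-1)"
  have Kpos: "K > 0" using u by (simp add: K_def)
  define h where "h i y = ennreal (if 0 < y \<and> y < a i then u else 1)" for i y
  define E where "E = {x \<in> space P. kth_largest (\<lambda>i. w i / x i) t l \<le> T}"
  define X where "X = u + (1-u) * exp (-M)"
  have Xpos: "X > 0" using u by (simp add: X_def add_pos_nonneg)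
  have pw: "indicator E x \<le> ennreal K * (\<Prod>i\<in>{1..t}. h i (x i))" if "x \<in> space P" for x
  proof (cases "x \<in> E")
    case True
    define S where "S = {i\<in>{1..t}. T < w i / x i}"
    have cS: "card S \<le> l - 1"
      using kth_card[OF l1, of "\<lambda>i. w i / x i" T] True by (simp add: E_def S_def)
    have "(\<Prod>i\<in>{1..t}. h i (x i)) = (\<Prod>i\<in>{1..t}. ennreal (if i \<in> S then u else 1))"
      by (rule prod.cong) (auto simp: h_def S_def equiv)
    also have "\<dots> = ennreal (\<Prod>i\<in>{1..t}. if i \<in> S then u else 1)"
      using u by (intro prod_ennreal) auto
    also have "(\<Prod>i\<in>{1..t}. if i \<in> S then u else 1) = u ^ card S"
    proof -
      have "S \<subseteq> {1..t}" by (auto simp: S_def)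
      then show ?thesis by (simp add: prod.If_cases Int_absorb1)
    qed
    finally have pe: "(\<Prod>i\<in>{1..t}. h i (x i)) = ennreal (u ^ card S)" .
    have "u ^ (l-1) \<le> u ^ card S" using u cS by (intro power_decreasing) auto
    then have "1 \<le> K * u ^ card S" using u by (simp add: K_def power_one_over field_simps)
    then have "ennreal 1 \<le> ennreal (K * u ^ card S)" by (rule ennreal_leI)
    then show ?thesis using True pe Kpos u by (simp add: ennreal_mult)
  qed simp
  have meas: "h i \<in> borel_measurable M0" for i unfolding h_def M0_def by measurable
  have intP: "(\<integral>\<^sup>+ x. (\<Prod>i\<in>{1..t}. h i (x i)) \<partial>P) = (\<Prod>i\<in>{1..t}. ennreal (u + (1-u) * exp (- a i)))"
    unfolding PP
    apply (subst PS.product_nn_integral_prod)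
      apply (simp_all add: meas)
    apply (rule prod.cong, rule refl)
    unfolding h_def M0_def using u apos by (intro integral_h) auto
  have bnd: "(\<Prod>i\<in>{1..t}. ennreal (u + (1-u) * exp (- a i))) \<le> ennreal (X ^ (2 * l))"
  proof -
    have "(\<Prod>i\<in>{1..t}. ennreal (u + (1-u) * exp (- a i))) = ennreal (\<Prod>i\<in>{1..t}. u + (1-u) * exp (- a i))"
      using u by (intro prod_ennreal) (simp add: add_nonneg_nonneg)
    also have "\<dots> \<le> ennreal (\<Prod>i\<in>{1..t}. X powr (a i / M))"
    proof (rule ennreal_leI, rule prod_mono)
      fix i assume i: "i \<in> {1..t}"
      show "0 \<le> u + (1-u) * exp (- a i) \<and> u + (1-u) * exp (- a i) \<le> X powr (a i / M)"
        using logconv[of "a i" M] apos[OF i] ale[OF i] Mpos u by (simp add: X_def u_def add_nonneg_nonneg)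
    qed
    also have "(\<Prod>i\<in>{1..t}. X powr (a i / M)) = X powr ((\<Sum>i\<in>{1..t}. a i) / M)"
      using Xpos by (simp add: powr_sum sum_divide_distrib)
    also have "(\<Sum>i\<in>{1..t}. a i) / M = real (2 * l)" using suma cpos by (simp add: M_def)
    also have "X powr real (2 * l) = X ^ (2 * l)" using Xpos by (rule powr_realpow)
    finally show ?thesis .
  qed
  have EP: "emeasure P E \<le> ennreal (K * X ^ (2 * l))"
  proof (cases "E \<in> sets P")
    case True
    have "emeasure P E = (\<integral>\<^sup>+ x. indicator E x \<partial>P)" using True by simp
    also have "\<dots> \<le> (\<integral>\<^sup>+ x. ennreal K * (\<Prod>i\<in>{1..t}. h i (x i)) \<partial>P)"
      by (rule nn_integral_mono) (rule pw)
    also have "\<dots> = ennreal K * (\<integral>\<^sup>+ x. (\<Prod>i\<in>{1..t}. h i (x i)) \<partial>P)"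
    proof (rule nn_integral_cmult)
      show "(\<lambda>x. \<Prod>i\<in>{1..t}. h i (x i)) \<in> borel_measurable P"
        unfolding PP using meas by measurable
    qed
    also have "\<dots> \<le> ennreal K * ennreal (X ^ (2 * l))" using intP bnd by (simp add: mult_left_mono)
    finally show ?thesis using Kpos by (simp add: ennreal_mult)
  next
    case False
    then show ?thesis by (simp add: emeasure_notin_sets)
  qed
  have m1: "measure P E \<le> K * X ^ (2 * l)"
    using EP Kpos Xpos by (simp add: P.emeasure_eq_measure)
  have m2: "measure P E \<le> 1" by (rule P.prob_le_1)
  have X2: "X \<le> 2 * u" using u by (simp add: X_def u_def[symmetric])
  obtain m where lm: "l = Suc m" using l1 by (cases l) auto
  have b1: "K * X ^ (2 * l) \<le> K * (2 * u) ^ (2 * l)"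
    using Kpos Xpos X2 by (intro mult_left_mono power_mono) auto
  have f4: "(4::real)^m = 2^m*2^m" by (simp add: power_mult_distrib[symmetric])
  have b2: "K * (2 * u) ^ (2 * l) = u * (4 * u) ^ l"
    using u f4 by (simp add: K_def lm power_mult_distrib power_add power_mult field_simps power_one_over power2_eq_square)
  have m3: "measure P E \<le> u * (4 * u) ^ l" using m1 b1 b2 by linarith
  have "measure P E \<le> 4 * u"
  proof (cases "4 * u \<le> 1")
    case True
    then have "(4 * u) ^ l \<le> 1" using u by (intro power_le_one) auto
    then have "u * (4 * u) ^ l \<le> u" using u by (simp add: mult_left_le)
    then show ?thesis using m3 u by linarith
  next
    case False
    then show ?thesis using m2 by linarith
  qed
  moreover have "u = exp (- (1/2) * c)" by (simp add: u_def M_def)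
  ultimately show ?thesis by (simp add: P_def E_def T_def W_def)
qed


theorem proposition3p3:
  shows "\<exists>lam C :: real. lam > 0 \<and> C > 0 \<and>
    (\<forall>(t::nat) (w::nat \<Rightarrow> real) (l::nat) (c::real).
       t \<ge> 1 \<longrightarrow> (\<forall>i\<in>{1..t}. w i > 0) \<longrightarrow> l \<in> {1..t} \<longrightarrow>
       (\<forall>i\<in>{1..t}. w i \<le> (\<Sum>j=1..t. w j) / (2 * real l)) \<longrightarrow> c \<ge> 1/2 \<longrightarrow>
       measure (exp_iid_space t)
         {x \<in> space (exp_iid_space t).
            kth_largest (\<lambda>i. w i / x i) t l \<le> (\<Sum>j=1..t. w j) / (c * real l)}
       \<le> lam * exp (- C * c))"
  apply (rule exI[of _ 4], rule exI[of _ "1/2"], intro conjI allI impI)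
    apply simp
   apply simp
  apply (rule main_bound)
      apply assumption+
  done

end
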